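(* Let $\lambda>0$ and let $\mathcal{H}=L^2(\mathbb{R})$ with orthonormal basis $\{|n\rangle\}_{n\in\mathbb{N}}$ (the eigenvectors of the quantum harmonic oscillator). Let $D\subset\mathcal{H}$ be the linear span of the $|n\rangle$, and let $D\odot D\subset \mathcal{H}\otimes\mathcal{H}$ be the algebraic tensor product. Define on $D$ the operators $a|n\rangle=\lambda\sqrt{n}\,|n-1\rangle$, $a^*|n\rangle=\lambda\sqrt{n+1}\,|n+1\rangle$, $q_1=\frac{1}{\sqrt2}(a+a^* )$, $q_2=\frac{1}{i\sqrt2}(a-a^* )$, and on $D\odot D$ the operator $$L^2=\sum_{\mu=1}^2\big(q_\mu\otimes\mathbb{I}-\mathbb{I}\otimes q_\mu\big)^2 .$$ For unit vectors $\psi,\varphi\in D$, write $\omega_\psi$ for the vector state $\omega_\psi(A)=\langle\psi,A\psi\rangle$, set $$d_{L^2}(\omega_\psi,\omega_\varphi)=\langle \psi\otimes\varphi,\,L^2\,(\psi\otimes\varphi)\rangle,$$ and define the modified quantum length $$d'_L(\omega_\psi,\omega_\varphi)=\sqrt{\Big|\,d_{L^2}(\omega_\psi,\omega_\varphi)-\sqrt{d_{L^2}(\omega_\psi,\omega_\psi)\,d_{L^2}(\omega_\varphi,\omega_\varphi)}\,\Big|}.$$ Then there is no self-adjoint operator $T$ on $\mathcal{H}\otimes\mathcal{H}$ whose domain contains $D\odot D$ such that $$\langle \psi\otimes\varphi,\,T\,(\psi\otimes\varphi)\rangle = d'_L(\omega_\psi,\omega_\varphi)^2$$ for all unit vectors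 $\psi,\varphi\in D$.
   Context: Here $\lambda$ plays the role of the Planck length $\lambda_P$; $a,a^*$ satisfy $[a,a^*]=\lambda^2\mathbb{I}$, and $H=\frac12(q_1^2+q_2^2)$ has eigenvalues $E_m=\lambda^2(m+\frac12)$ on $|m\rangle$. The operator $L^2$ is the square of the length operator $L=\sqrt{\sum_\mu (dq_\mu)^2}$ with $dq_\mu=q_\mu\otimes\mathbb{I}-\mathbb{I}\otimes q_\mu$ of the Moyal (quantum) plane; vector states $\omega_\psi$ are pure states of the algebra of compact operators on $L^2(\mathbb{R})$. *)

theory Defs
  imports "HOL-Analysis.Analysis"
begin

text \<open>The Hilbert space L2(R) is identified with l2(N) via the orthonormal basis of
  harmonic oscillator eigenvectors |n>; a vector is the sequence of its coefficients.
  H (x) H is correspondingly identified with l2(N x N).\<close>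

definition l2_space :: "('i \<Rightarrow> complex) set" where
  "l2_space = {f. (\<lambda>x. (cmod (f x))\<^sup>2) summable_on UNIV}"

definition l2_inner :: "('i \<Rightarrow> complex) \<Rightarrow> ('i \<Rightarrow> complex) \<Rightarrow> complex" where
  "l2_inner f g = infsum (\<lambda>x. cnj (f x) * g x) UNIV"

definition l2_norm :: "('i \<Rightarrow> complex) \<Rightarrow> real" where
  "l2_norm f = sqrt (infsum (\<lambda>x. (cmod (f x))\<^sup>2) UNIV)"

text \<open>D: linear span of the basis vectors |n> (finitely supported coefficient sequences).\<close>
definition finspan_D :: "(nat \<Rightarrow> complex) set" where
  "finspan_D = {\<psi>. finite {n. \<psi> n \<noteq> 0}}"

definition tensor :: "(nat \<Rightarrow> complex) \<Rightarrow> (nat \<Rightarrow> complex) \<Rightarrow> (nat \<times> nat \<Rightarrow> complex)" where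
  "tensor \<psi> \<phi> = (\<lambda>(m, n). \<psi> m * \<phi> n)"

definition alg_tensor :: "(nat \<Rightarrow> complex) set \<Rightarrow> (nat \<times> nat \<Rightarrow> complex) set" where
  "alg_tensor V = {F. \<exists>(k::nat) \<psi>s \<phi>s. (\<forall>i<k. \<psi>s i \<in> V \<and> \<phi>s i \<in> V) \<and>
       F = (\<lambda>x. \<Sum>i<k. tensor (\<psi>s i) (\<phi>s i) x)}"

text \<open>a|n> = lam sqrt n |n-1>,  a*|n> = lam sqrt(n+1) |n+1>, in coefficients.\<close>
definition ann_op :: "real \<Rightarrow> (nat \<Rightarrow> complex) \<Rightarrow> (nat \<Rightarrow> complex)" where
  "ann_op lam \<psi> = (\<lambda>n. complex_of_real (lam * sqrt (real (Suc n))) * \<psi> (Suc n))"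

definition cre_op :: "real \<Rightarrow> (nat \<Rightarrow> complex) \<Rightarrow> (nat \<Rightarrow> complex)" where
  "cre_op lam \<psi> = (\<lambda>n. if n = 0 then 0 else complex_of_real (lam * sqrt (real n)) * \<psi> (n - 1))"

definition q1_op :: "real \<Rightarrow> (nat \<Rightarrow> complex) \<Rightarrow> (nat \<Rightarrow> complex)" where
  "q1_op lam \<psi> = (\<lambda>n. (ann_op lam \<psi> n + cre_op lam \<psi> n) / complex_of_real (sqrt 2))"

definition q2_op :: "real \<Rightarrow> (nat \<Rightarrow> complex) \<Rightarrow> (nat \<Rightarrow> complex)" where
  "q2_op lam \<psi> = (\<lambda>n. (ann_op lam \<psi> n - cre_op lam \<psi> n) / (\<i> * complex_of_real (sqrt 2)))"

definition left_op :: "((nat \<Rightarrow> complex) \<Rightarrow> (nat \<Rightarrow> complex)) \<Rightarrow> (nat \<times> nat \<Rightarrow> complex) \<Rightarrow> (nat \<times> nat \<Rightarrow> complex)" where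
  "left_op A F = (\<lambda>(m, n). A (\<lambda>m'. F (m', n)) m)"

definition right_op :: "((nat \<Rightarrow> complex) \<Rightarrow> (nat \<Rightarrow> complex)) \<Rightarrow> (nat \<times> nat \<Rightarrow> complex) \<Rightarrow> (nat \<times> nat \<Rightarrow> complex)" where
  "right_op A F = (\<lambda>(m, n). A (\<lambda>n'. F (m, n')) n)"

definition dq_op :: "((nat \<Rightarrow> complex) \<Rightarrow> (nat \<Rightarrow> complex)) \<Rightarrow> (nat \<times> nat \<Rightarrow> complex) \<Rightarrow> (nat \<times> nat \<Rightarrow> complex)" where
  "dq_op A F = (\<lambda>x. left_op A F x - right_op A F x)"

definition L2_op :: "real \<Rightarrow> (nat \<times> nat \<Rightarrow> complex) \<Rightarrow> (nat \<times> nat \<Rightarrow> complex)" where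
  "L2_op lam F = (\<lambda>x. dq_op (q1_op lam) (dq_op (q1_op lam) F) x
                    + dq_op (q2_op lam) (dq_op (q2_op lam) F) x)"

definition d_L2 :: "real \<Rightarrow> (nat \<Rightarrow> complex) \<Rightarrow> (nat \<Rightarrow> complex) \<Rightarrow> complex" where
  "d_L2 lam \<psi> \<phi> = l2_inner (tensor \<psi> \<phi>) (L2_op lam (tensor \<psi> \<phi>))"

definition d_L_mod :: "real \<Rightarrow> (nat \<Rightarrow> complex) \<Rightarrow> (nat \<Rightarrow> complex) \<Rightarrow> real" where
  "d_L_mod lam \<psi> \<phi> =
     sqrt (cmod (d_L2 lam \<psi> \<phi> - csqrt (d_L2 lam \<psi> \<psi> * d_L2 lam \<phi> \<phi>)))"

text \<open>(Possibly unbounded) self-adjoint operator on l2(I) with domain Dom: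
  Dom is a dense linear subspace, T is linear on Dom, and T equals its adjoint
  (the adjoint domain equals Dom and T is symmetric on Dom).\<close>
definition self_adjoint_on :: "('i \<Rightarrow> complex) set \<Rightarrow> (('i \<Rightarrow> complex) \<Rightarrow> ('i \<Rightarrow> complex)) \<Rightarrow> bool" where
  "self_adjoint_on Dom T \<longleftrightarrow>
     Dom \<subseteq> l2_space \<and> (\<lambda>_. 0) \<in> Dom \<and>
     (\<forall>f\<in>Dom. \<forall>g\<in>Dom. (\<lambda>x. f x + g x) \<in> Dom) \<and>
     (\<forall>c. \<forall>f\<in>Dom. (\<lambda>x. c * f x) \<in> Dom) \<and>
     (\<forall>f\<in>l2_space. \<forall>e>0. \<exists>g\<in>Dom. l2_norm (\<lambda>x. f x - g x) < e) \<and>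
     (\<forall>f\<in>Dom. T f \<in> l2_space) \<and>
     (\<forall>f\<in>Dom. \<forall>g\<in>Dom. T (\<lambda>x. f x + g x) = (\<lambda>x. T f x + T g x)) \<and>
     (\<forall>c. \<forall>f\<in>Dom. T (\<lambda>x. c * f x) = (\<lambda>x. c * T f x)) \<and>
     (\<forall>f\<in>Dom. \<forall>g\<in>Dom. l2_inner (T f) g = l2_inner f (T g)) \<and>
     (\<forall>y\<in>l2_space. (\<exists>z\<in>l2_space. \<forall>x\<in>Dom. l2_inner (T x) y = l2_inner x z) \<longrightarrow> y \<in> Dom)"

end

theory Submission
  imports Defs
begin

lemma infsum_supp:
  assumes "finite S" "\<And>x. x \<notin> S \<Longrightarrow> f x = 0"
  shows "infsum f UNIV = sum f S"
proof -
  have "infsum f UNIV = infsum f S"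
    by (rule infsum_cong_neutral) (use assms in auto)
  thus ?thesis using assms by simp
qed

lemma inner_supp:
  assumes "finite S" "\<And>x. x \<notin> S \<Longrightarrow> F x = 0"
  shows "l2_inner F G = (\<Sum>x\<in>S. cnj (F x) * G x)"
  unfolding l2_inner_def by (rule infsum_supp) (use assms in auto)

definition e0 :: "nat \<Rightarrow> complex" where "e0 = (\<lambda>n. if n = 0 then 1 else 0)"
definition e1 :: "nat \<Rightarrow> complex" where "e1 = (\<lambda>n. if n = 1 then 1 else 0)"
definition pp :: "nat \<Rightarrow> complex" where "pp = (\<lambda>n. if n = 0 then complex_of_real (sqrt 2 / 2) else if n = 1 then complex_of_real (sqrt 2 / 2) else 0)"
definition pm :: "nat \<Rightarrow> complex" where "pm = (\<lambda>n. if n = 0 then complex_of_real (sqrt 2 / 2) else if n = 1 then - complex_of_real (sqrt 2 / 2) else 0)"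

lemma supp_t: assumes "\<And>n. n > 1 \<Longrightarrow> \<psi> n = 0" "\<And>n. n > 1 \<Longrightarrow> \<phi> n = 0"
  shows "x \<notin> {(0,0),(0,1),(1,0),(1,1)} \<Longrightarrow> tensor \<psi> \<phi> x = 0"
  using assms by (cases x) (auto simp: tensor_def)

lemma inner4:
  assumes "\<And>n. n > 1 \<Longrightarrow> \<psi> n = 0" "\<And>n. n > 1 \<Longrightarrow> \<phi> n = 0"
  shows "l2_inner (tensor \<psi> \<phi>) G = cnj (\<psi> 0 * \<phi> 0) * G (0,0) + cnj (\<psi> 0 * \<phi> 1) * G (0,1)
      + cnj (\<psi> 1 * \<phi> 0) * G (1,0) + cnj (\<psi> 1 * \<phi> 1) * G (1,1)"
proof -
  have "l2_inner (tensor \<psi> \<phi>) G = (\<Sum>x\<in>{(0,0),(0,1),(1,0),(1,1)}. cnj (tensor \<psi> \<phi> x) * G x)"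
    by (rule inner_supp) (use supp_t[OF assms] in auto)
  also have "\<dots> = cnj (\<psi> 0 * \<phi> 0) * G (0,0) + cnj (\<psi> 0 * \<phi> 1) * G (0,1)
      + cnj (\<psi> 1 * \<phi> 0) * G (1,0) + cnj (\<psi> 1 * \<phi> 1) * G (1,1)"
    by (simp add: tensor_def add.assoc)
  finally show ?thesis .
qed

lemma s2: "complex_of_real (sqrt 2) * complex_of_real (sqrt 2) = 2"
  by (simp flip: of_real_mult)

lemmas opdefs = L2_op_def dq_op_def left_op_def right_op_def q1_op_def q2_op_def ann_op_def cre_op_def tensor_def

lemma d00: "d_L2 lam e0 e0 = 2 * lam^2"
  unfolding d_L2_def
  by (subst inner4) (auto simp: e0_def e1_def pp_def pm_def opdefs field_simps power2_eq_square s2)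

lemma d11: "d_L2 lam e1 e1 = 6 * lam^2"
  unfolding d_L2_def
  by (subst inner4) (auto simp: e0_def e1_def pp_def pm_def opdefs field_simps power2_eq_square s2)

lemma d10: "d_L2 lam e1 e0 = 4 * lam^2"
  unfolding d_L2_def
  by (subst inner4) (auto simp: e0_def e1_def pp_def pm_def opdefs field_simps power2_eq_square s2)

lemma dpp: "d_L2 lam pp pp = 3 * lam^2"
  unfolding d_L2_def
  by (subst inner4) (auto simp: e0_def e1_def pp_def pm_def opdefs field_simps power2_eq_square s2)

lemma dmm: "d_L2 lam pm pm = 3 * lam^2"
  unfolding d_L2_def
  by (subst inner4) (auto simp: e0_def e1_def pp_def pm_def opdefs field_simps power2_eq_square s2)

lemma dp0: "d_L2 lam pp e0 = 3 * lam^2"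
  unfolding d_L2_def
  by (subst inner4) (auto simp: e0_def e1_def pp_def pm_def opdefs field_simps power2_eq_square s2)

lemma dm0: "d_L2 lam pm e0 = 3 * lam^2"
  unfolding d_L2_def
  by (subst inner4) (auto simp: e0_def e1_def pp_def pm_def opdefs field_simps power2_eq_square s2)


lemma dmod_gen:
  assumes "d_L2 lam \<psi> \<phi> = complex_of_real (a * lam^2)" "d_L2 lam \<psi> \<psi> = complex_of_real (b * lam^2)"
    "d_L2 lam \<phi> \<phi> = complex_of_real (c * lam^2)" "b \<ge> 0" "c \<ge> 0"
  shows "(d_L_mod lam \<psi> \<phi>)^2 = \<bar>a - sqrt (b*c)\<bar> * lam^2"
proof -
  have "csqrt (d_L2 lam \<psi> \<psi> * d_L2 lam \<phi> \<phi>) = complex_of_real (sqrt (b*c) * lam^2)"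
  proof -
    have "d_L2 lam \<psi> \<psi> * d_L2 lam \<phi> \<phi> = complex_of_real ((b*c) * (lam^2)^2)"
      by (simp add: assms power2_eq_square)
    moreover have "sqrt ((b*c) * (lam^2)^2) = sqrt (b*c) * lam^2"
    proof -
      have "sqrt ((lam^2)^2) = lam^2" by (simp only: real_sqrt_abs) simp
      thus ?thesis by (simp only: real_sqrt_mult)
    qed
    ultimately show ?thesis using assms by (simp only: csqrt_of_real mult_nonneg_nonneg zero_le_power2)
  qed
  hence "d_L2 lam \<psi> \<phi> - csqrt (d_L2 lam \<psi> \<psi> * d_L2 lam \<phi> \<phi>) = complex_of_real ((a - sqrt (b*c)) * lam^2)"
    using assms by (simp add: algebra_simps)
  hence "cmod (d_L2 lam \<psi> \<phi> - csqrt (d_L2 lam \<psi> \<psi> * d_L2 lam \<phi> \<phi>)) = \<bar>a - sqrt (b*c)\<bar> * lam^2"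
    by (simp only: norm_of_real abs_mult abs_power2)
  thus ?thesis unfolding d_L_mod_def by simp
qed

lemma norm1:
  fixes \<psi> :: "nat \<Rightarrow> complex"
  assumes "\<And>n. n > 1 \<Longrightarrow> \<psi> n = 0" "(cmod (\<psi> 0))^2 + (cmod (\<psi> 1))^2 = 1"
  shows "l2_norm \<psi> = 1"
proof -
  have "infsum (\<lambda>x. (cmod (\<psi> x))\<^sup>2) UNIV = (\<Sum>x\<in>{0,1}. (cmod (\<psi> x))\<^sup>2)"
  proof (rule infsum_supp)
    fix x :: nat assume "x \<notin> {0,1}" hence "1 < x" by auto
    thus "(cmod (\<psi> x))\<^sup>2 = 0" using assms(1) by simp
  qed simp
  thus ?thesis using assms(2) unfolding l2_norm_def by simp
qed

lemma fin: fixes \<psi> :: "nat \<Rightarrow> complex" assumes "\<And>n. n > 1 \<Longrightarrow> \<psi> n = 0" shows "\<psi> \<in> finspan_D"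
proof -
  have "{n. \<psi> n \<noteq> 0} \<subseteq> {0,1}"
  proof
    fix x assume "x \<in> {n. \<psi> n \<noteq> 0}"
    thus "x \<in> {0,1}" using assms[of x] by (cases "1 < x") auto
  qed
  thus ?thesis unfolding finspan_D_def mem_Collect_eq by (rule finite_subset) simp
qed

lemma alg: assumes "\<psi> \<in> V" "\<phi> \<in> V" shows "tensor \<psi> \<phi> \<in> alg_tensor V"
  unfolding alg_tensor_def
  by (rule CollectI, rule exI[of _ 1], rule exI[of _ "\<lambda>_. \<psi>"], rule exI[of _ "\<lambda>_. \<phi>"]) (use assms in auto)

lemma n_e0: "l2_norm e0 = 1" by (rule norm1) (auto simp: e0_def)
lemma n_e1: "l2_norm e1 = 1" by (rule norm1) (auto simp: e1_def)
lemma n_pp: "l2_norm pp = 1" by (rule norm1) (auto simp: pp_def power_divide)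
lemma n_pm: "l2_norm pm = 1" by (rule norm1) (auto simp: pm_def power_divide)
lemma f_e0: "e0 \<in> finspan_D" by (rule fin) (auto simp: e0_def)
lemma f_e1: "e1 \<in> finspan_D" by (rule fin) (auto simp: e1_def)
lemma f_pp: "pp \<in> finspan_D" by (rule fin) (auto simp: pp_def)
lemma f_pm: "pm \<in> finspan_D" by (rule fin) (auto simp: pm_def)

lemma sq12: "sqrt (6*2::real) = 2 * sqrt 3"
proof -
  have "sqrt (6*2::real) = sqrt (4*3)" by simp
  also have "\<dots> = 2 * sqrt 3" by (simp only: real_sqrt_mult) simp
  finally show ?thesis .
qed
lemma s3: "sqrt 3 < (2::real)"
proof -
  have "sqrt 3 < sqrt (4::real)" by (rule real_sqrt_less_mono) simp
  thus ?thesis by simp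
qed

lemma m00: "(d_L_mod lam e0 e0)^2 = 0"
  using dmod_gen[of lam e0 e0 2 2 2] d00 by simp
lemma m10: "(d_L_mod lam e1 e0)^2 = (4 - 2 * sqrt 3) * lam^2"
  using dmod_gen[of lam e1 e0 4 6 2] d10 d11 d00 sq12 s3 by simp
lemma s6: "sqrt 6 < (3::real)"
proof -
  have "sqrt 6 < sqrt (9::real)" by (rule real_sqrt_less_mono) simp
  moreover have "sqrt (9::real) = 3" by (simp add: real_sqrt_eq_iff)
  ultimately show ?thesis by simp
qed
lemma mp: "(d_L_mod lam pp e0)^2 = (3 - sqrt 6) * lam^2"
  using dmod_gen[of lam pp e0 3 3 2] dp0 dpp d00 s6 by simp
lemma mm: "(d_L_mod lam pm e0)^2 = (3 - sqrt 6) * lam^2"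
  using dmod_gen[of lam pm e0 3 3 2] dm0 dmm d00 s6 by simp

lemma ineq: "2 * (3 - sqrt 6) \<noteq> (4 - 2 * sqrt (3::real))"
proof
  assume "2 * (3 - sqrt 6) = (4 - 2 * sqrt (3::real))"
  hence "sqrt 6 = 1 + sqrt 3" by simp
  hence "(sqrt 6)^2 = (1 + sqrt (3::real))^2" by simp
  hence "6 = 4 + 2 * sqrt (3::real)" by (simp add: power2_eq_square algebra_simps)
  hence "sqrt 3 = (1::real)" by simp
  thus False by simp
qed

theorem mainTheorem1:
  fixes lam :: real
  assumes "lam > 0"
  shows "\<not> (\<exists>(Dom :: (nat \<times> nat \<Rightarrow> complex) set) T.
            self_adjoint_on Dom T \<and> alg_tensor finspan_D \<subseteq> Dom \<and>
            (\<forall>\<psi>\<in>finspan_D. \<forall>\<phi>\<in>finspan_D. l2_norm \<psi> = 1 \<longrightarrow> l2_norm \<phi> = 1 \<longrightarrow>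
               l2_inner (tensor \<psi> \<phi>) (T (tensor \<psi> \<phi>)) = complex_of_real ((d_L_mod lam \<psi> \<phi>)\<^sup>2)))"
proof
  assume "\<exists>(Dom :: (nat \<times> nat \<Rightarrow> complex) set) T.
            self_adjoint_on Dom T \<and> alg_tensor finspan_D \<subseteq> Dom \<and>
            (\<forall>\<psi>\<in>finspan_D. \<forall>\<phi>\<in>finspan_D. l2_norm \<psi> = 1 \<longrightarrow> l2_norm \<phi> = 1 \<longrightarrow>
               l2_inner (tensor \<psi> \<phi>) (T (tensor \<psi> \<phi>)) = complex_of_real ((d_L_mod lam \<psi> \<phi>)\<^sup>2))"
  then obtain Dom :: "(nat \<times> nat \<Rightarrow> complex) set" and T where sa: "self_adjoint_on Dom T"
    and sub: "alg_tensor finspan_D \<subseteq> Dom"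
    and hyp: "\<forall>\<psi>\<in>finspan_D. \<forall>\<phi>\<in>finspan_D. l2_norm \<psi> = 1 \<longrightarrow> l2_norm \<phi> = 1 \<longrightarrow>
               l2_inner (tensor \<psi> \<phi>) (T (tensor \<psi> \<phi>)) = complex_of_real ((d_L_mod lam \<psi> \<phi>)\<^sup>2)"
    by blast
  have addD: "\<forall>f\<in>Dom. \<forall>g\<in>Dom. (\<lambda>x. f x + g x) \<in> Dom"
    and smulD: "\<forall>c. \<forall>f\<in>Dom. (\<lambda>x. c * f x) \<in> Dom"
    and addT: "\<forall>f\<in>Dom. \<forall>g\<in>Dom. T (\<lambda>x. f x + g x) = (\<lambda>x. T f x + T g x)"
    and smulT: "\<forall>c. \<forall>f\<in>Dom. T (\<lambda>x. c * f x) = (\<lambda>x. c * T f x)"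
    using sa unfolding self_adjoint_on_def by blast+
  define u where "u = tensor e0 e0"
  define v where "v = tensor e1 e0"
  define c where "c = complex_of_real (sqrt 2 / 2)"
  have uD: "u \<in> Dom" unfolding u_def using sub alg f_e0 by blast
  have vD: "v \<in> Dom" unfolding v_def using sub alg f_e0 f_e1 by blast
  have cc: "c * c = 1/2" unfolding c_def by (simp flip: of_real_mult)
  have cnjc: "cnj c = c" unfolding c_def by simp
  have epp: "tensor pp e0 = (\<lambda>x. (\<lambda>x. c * u x) x + (\<lambda>x. c * v x) x)"
    by (auto simp: fun_eq_iff tensor_def pp_def e0_def e1_def c_def u_def v_def)
  have epm: "tensor pm e0 = (\<lambda>x. (\<lambda>x. c * u x) x + (\<lambda>x. (-c) * v x) x)"
    by (auto simp: fun_eq_iff tensor_def pm_def e0_def e1_def c_def u_def v_def)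
  have cu: "(\<lambda>x. c * u x) \<in> Dom" using smulD uD by blast
  have cv: "(\<lambda>x. c * v x) \<in> Dom" using smulD vD by blast
  have cmv: "(\<lambda>x. (-c) * v x) \<in> Dom" using smulD vD by blast
  have Tp: "T (tensor pp e0) = (\<lambda>x. c * T u x + c * T v x)"
  proof -
    have "T (tensor pp e0) = (\<lambda>x. T (\<lambda>x. c * u x) x + T (\<lambda>x. c * v x) x)"
      unfolding epp using addT[rule_format, OF cu cv] by simp
    thus ?thesis by (simp only: smulT[rule_format, OF uD] smulT[rule_format, OF vD])
  qed
  have Tm: "T (tensor pm e0) = (\<lambda>x. c * T u x + (-c) * T v x)"
  proof -
    have "T (tensor pm e0) = (\<lambda>x. T (\<lambda>x. c * u x) x + T (\<lambda>x. (-c) * v x) x)"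
      unfolding epm using addT[rule_format, OF cu cmv] by simp
    thus ?thesis by (simp only: smulT[rule_format, OF uD] smulT[rule_format, OF vD])
  qed
  have Qu: "l2_inner u (T u) = T u (0,0)"
    unfolding u_def by (subst inner4) (auto simp: e0_def)
  have Qv: "l2_inner v (T v) = T v (1,0)"
    unfolding v_def by (subst inner4) (auto simp: e0_def e1_def)
  have Qp: "l2_inner (tensor pp e0) (T (tensor pp e0)) = c * (c * T u (0,0) + c * T v (0,0)) + c * (c * T u (1,0) + c * T v (1,0))"
    unfolding Tp by (subst inner4) (auto simp: e0_def pp_def c_def)
  have Qm: "l2_inner (tensor pm e0) (T (tensor pm e0)) = c * (c * T u (0,0) + (-c) * T v (0,0)) - c * (c * T u (1,0) + (-c) * T v (1,0))"
    unfolding Tm by (subst inner4) (auto simp: e0_def pm_def c_def)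
  have "l2_inner (tensor pp e0) (T (tensor pp e0)) + l2_inner (tensor pm e0) (T (tensor pm e0))
      = 2 * (c * c) * (T u (0,0) + T v (1,0))"
    unfolding Qp Qm by (simp add: algebra_simps)
  also have "\<dots> = l2_inner u (T u) + l2_inner v (T v)" using cc Qu Qv by (simp add: mult.commute)
  finally have eq: "l2_inner (tensor pp e0) (T (tensor pp e0)) + l2_inner (tensor pm e0) (T (tensor pm e0))
      = l2_inner u (T u) + l2_inner v (T v)" .
  have h1: "l2_inner (tensor pp e0) (T (tensor pp e0)) = complex_of_real ((3 - sqrt 6) * lam^2)"
    using hyp f_pp f_e0 n_pp n_e0 mp by metis
  have h2: "l2_inner (tensor pm e0) (T (tensor pm e0)) = complex_of_real ((3 - sqrt 6) * lam^2)"
    using hyp f_pm f_e0 n_pm n_e0 mm by metis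
  have h3: "l2_inner u (T u) = complex_of_real 0"
    unfolding u_def using hyp f_e0 n_e0 m00 by metis
  have h4: "l2_inner v (T v) = complex_of_real ((4 - 2 * sqrt 3) * lam^2)"
    unfolding v_def using hyp f_e1 f_e0 n_e1 n_e0 m10 by metis
  have "complex_of_real ((3 - sqrt 6) * lam^2 + (3 - sqrt 6) * lam^2) = complex_of_real (0 + (4 - 2 * sqrt 3) * lam^2)"
    unfolding of_real_add using eq h1 h2 h3 h4 by simp
  hence "(3 - sqrt 6) * lam^2 + (3 - sqrt 6) * lam^2 = 0 + (4 - 2 * sqrt 3) * lam^2" by (simp only: of_real_eq_iff)
  hence "(2 * (3 - sqrt 6)) * lam^2 = (4 - 2 * sqrt (3::real)) * lam^2" by simp
  hence "2 * (3 - sqrt 6) = (4 - 2 * sqrt (3::real))" using assms by simp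
  thus False using ineq by blast
qed
end
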